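(* Assume only the weight regularity condition (so $\mathbb E[W^2]<\infty$). Then \[ \lim_{\beta\nearrow\beta_c}\widetilde\chi(\beta,0^+)(\beta_c-\beta)=\frac{\mathbb E[W]^2}{\mathbb E[W^2]}\tanh(\beta_c), \] so in particular $\boldsymbol\gamma=1$.
   Context: Weights $w_i>0$, $W_N=w_{U_N}$, $U_N$ uniform on $[N]$. Weight regularity: $W_N\to W$ in distribution, $\mathbb E[W_N^2]\to\mathbb E[W^2]<\infty$, $\mathbb E[W]>0$. $\nu=\mathbb E[W^2]/\mathbb E[W]$, $\beta_c={\rm asinh}(1/\nu)$, $\alpha(\beta)=\sqrt{\sinh(\beta)/\mathbb E[W]}$. For $B>0$, $z^*(\beta,B)$ is the unique positive solution of $z=\mathbb E[\tanh(\alpha(\beta)Wz+B)\alpha(\beta)W]$ (for $\beta<\beta_c$, $z^*(\beta,B)\to0$ as $B\searrow0$), $\widetilde M(\beta,B)=\mathbb E[\tanh(\alpha(\beta)Wz^*+B)]$ is the limiting annealed magnetization of the Ising model on the generalized random graph, $\widetilde\chi(\beta,B)=\partial_B\widetilde M(\beta,B)$ the limiting annealed susceptibility, and $\widetilde\chi(\beta,0^+)=\lim_{B\searrow0}\widetilde\chi(\beta,B)$. The critical exponent $\boldsymbol\gamma$ is defined by $\widetilde\chi(\beta,0^+)\asymp(\beta_c-\beta)^{-\boldsymbol\gamma}$ as $\beta\nearrow\beta_c$. *)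

theory Defs
  imports "HOL-Probability.Probability"
begin

text \<open>The limiting weight W is a real random variable W on a probability space M.
  All limiting quantities depend only on the law of W.\<close>

definition nu :: "'a measure \<Rightarrow> ('a \<Rightarrow> real) \<Rightarrow> real" where
  "nu M W = (\<integral>x. (W x)^2 \<partial>M) / (\<integral>x. W x \<partial>M)"

definition beta_c :: "'a measure \<Rightarrow> ('a \<Rightarrow> real) \<Rightarrow> real" where
  "beta_c M W = arsinh (1 / nu M W)"

definition alpha :: "'a measure \<Rightarrow> ('a \<Rightarrow> real) \<Rightarrow> real \<Rightarrow> real" where
  "alpha M W \<beta> = sqrt (sinh \<beta> / (\<integral>x. W x \<partial>M))"

definition zstar :: "'a measure \<Rightarrow> ('a \<Rightarrow> real) \<Rightarrow> real \<Rightarrow> real \<Rightarrow> real" where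
  "zstar M W \<beta> B = (THE z. z > 0 \<and>
      z = (\<integral>x. tanh (alpha M W \<beta> * W x * z + B) * (alpha M W \<beta> * W x) \<partial>M))"

definition Mtilde :: "'a measure \<Rightarrow> ('a \<Rightarrow> real) \<Rightarrow> real \<Rightarrow> real \<Rightarrow> real" where
  "Mtilde M W \<beta> B = (\<integral>x. tanh (alpha M W \<beta> * W x * zstar M W \<beta> B + B) \<partial>M)"

definition chi :: "'a measure \<Rightarrow> ('a \<Rightarrow> real) \<Rightarrow> real \<Rightarrow> real \<Rightarrow> real" where
  "chi M W \<beta> B = deriv (\<lambda>b. Mtilde M W \<beta> b) B"

definition chi0 :: "'a measure \<Rightarrow> ('a \<Rightarrow> real) \<Rightarrow> real \<Rightarrow> real" where
  "chi0 M W \<beta> = Lim (at_right 0) (chi M W \<beta>)"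

end

theory Submission
  imports Defs
begin



lemma tanh_deriv_real: "(tanh has_real_derivative (1 - tanh x ^ 2)) (at (x::real))"
  using has_field_derivative_tanh[OF _ DERIV_ident, of x UNIV] by (simp add: order.strict_implies_not_eq[OF cosh_real_pos, symmetric])

lemma tanh_lip_aux: assumes "(x::real) < y" shows "\<bar>tanh y - tanh x\<bar> \<le> y - x"
proof -
  obtain z where "x < z" "z < y" "tanh y - tanh x = (y - x) * (1 - tanh z ^ 2)"
    using MVT2[OF assms, of tanh "\<lambda>t. 1 - tanh t ^ 2"] tanh_deriv_real by blast
  moreover have "0 \<le> 1 - tanh z ^ 2" "1 - tanh z ^ 2 \<le> 1"
    using tanh_real_bounds[of z] by (auto simp: abs_square_le_1)
  ultimately show ?thesis using assms by (simp add: abs_mult mult_le_cancel_left1)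
qed

lemma tanh_lip: "\<bar>tanh (y::real) - tanh x\<bar> \<le> \<bar>y - x\<bar>"
  using tanh_lip_aux[of x y] tanh_lip_aux[of y x]
  by (cases x y rule: linorder_cases) (auto simp: abs_minus_commute)

lemma tanh_abs_le: "\<bar>tanh (x::real)\<bar> \<le> \<bar>x\<bar>"
  using tanh_lip[of x 0] by simp

lemma tanh_abs_lt1: "\<bar>tanh (x::real)\<bar> < 1"
  using tanh_real_bounds[of x] by auto

lemma tanh_sq_le: "tanh (t::real) ^ 2 \<le> min 1 \<bar>t\<bar>"
proof -
  have a: "\<bar>tanh t\<bar> \<le> 1" using tanh_abs_lt1[of t] by simp
  have "tanh t ^ 2 = \<bar>tanh t\<bar> * \<bar>tanh t\<bar>" by (simp add: power2_eq_square abs_mult_self_eq)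
  also have "\<dots> \<le> \<bar>tanh t\<bar>" using mult_left_le[OF a abs_ge_zero[of "tanh t"]] .
  finally have "tanh t ^ 2 \<le> \<bar>tanh t\<bar>" .
  then show ?thesis using a tanh_abs_le[of t] by simp
qed

lemma S_bounds: "0 \<le> 1 - tanh (t::real) ^ 2" "1 - tanh t ^ 2 \<le> 1"
  using tanh_abs_lt1[of t] by (auto simp: abs_square_le_1)

lemma tanh_rem_aux:
  assumes "(a::real) < b" and "\<And>t. g t = tanh t - (1 - tanh x ^ 2) * t"
  shows "\<bar>g b - g a\<bar> \<le> (b - a) * (2 * max \<bar>a - x\<bar> \<bar>b - x\<bar>)"
proof -
  have d: "\<And>t. (g has_real_derivative ((1 - tanh t ^ 2) - (1 - tanh x ^ 2))) (at t)"
    unfolding assms(2)[abs_def]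
    by (rule derivative_eq_intros tanh_deriv_real refl | simp)+
  obtain z where z: "a < z" "z < b" "g b - g a = (b - a) * ((1 - tanh z ^ 2) - (1 - tanh x ^ 2))"
    using MVT2[OF assms(1), of g "\<lambda>t. (1 - tanh t ^ 2) - (1 - tanh x ^ 2)"] d by blast
  have "\<bar>(1 - tanh z ^ 2) - (1 - tanh x ^ 2)\<bar> = \<bar>tanh x - tanh z\<bar> * \<bar>tanh x + tanh z\<bar>"
    by (simp add: power2_eq_square algebra_simps abs_mult[symmetric])
  also have "\<dots> \<le> \<bar>x - z\<bar> * 2"
    apply (rule mult_mono)
    using tanh_lip[of x z] tanh_abs_lt1[of x] tanh_abs_lt1[of z] by auto
  also have "\<bar>x - z\<bar> \<le> max \<bar>a - x\<bar> \<bar>b - x\<bar>" using z by auto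
  finally have "\<bar>(1 - tanh z ^ 2) - (1 - tanh x ^ 2)\<bar> \<le> 2 * max \<bar>a - x\<bar> \<bar>b - x\<bar>"
    by (simp add: mult_right_mono)
  then show ?thesis using z assms(1) by (simp add: abs_mult mult_left_mono)
qed

lemma tanh_rem: "\<bar>tanh y - tanh x - (1 - tanh x ^ 2) * (y - x)\<bar> \<le> 2 * \<bar>y - x\<bar> * min 1 \<bar>y - (x::real)\<bar>"
proof -
  define g where "g t = tanh t - (1 - tanh x ^ 2) * t" for t
  have eq: "tanh y - tanh x - (1 - tanh x ^ 2) * (y - x) = g y - g x" by (simp add: g_def algebra_simps)
  have b1: "\<bar>g y - g x\<bar> \<le> 2 * \<bar>y - x\<bar> * \<bar>y - x\<bar>"
  proof (cases x y rule: linorder_cases)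
    case less
    from tanh_rem_aux[OF less, of g x] show ?thesis using less by (simp add: g_def abs_minus_commute) (metis mult.commute)
  next
    case greater
    from tanh_rem_aux[OF greater, of g x] show ?thesis using greater by (simp add: g_def abs_minus_commute) (metis mult.commute)
  qed simp
  have b2: "\<bar>g y - g x\<bar> \<le> 2 * \<bar>y - x\<bar>"
  proof -
    have "\<bar>g y - g x\<bar> \<le> \<bar>tanh y - tanh x\<bar> + \<bar>(1 - tanh x ^ 2) * (y - x)\<bar>"
      unfolding g_def by (simp add: algebra_simps)
    also have "\<bar>(1 - tanh x ^ 2) * (y - x)\<bar> \<le> \<bar>y - x\<bar>"
      using S_bounds[of x] by (simp add: abs_mult mult_left_le_one_le)
    finally show ?thesis using tanh_lip[of y x] by simp
  qed
  show ?thesis unfolding eq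
    by (cases "\<bar>y - x\<bar> \<le> 1") (use b1 b2 in \<open>auto simp: min_def\<close>)
qed




lemma tanh_meas[measurable]: "f \<in> borel_measurable M \<Longrightarrow> (\<lambda>x. tanh (f x :: real)) \<in> borel_measurable M"
  by (rule measurable_compose[OF _ borel_measurable_continuous_onI]) (auto intro!: continuous_intros)

lemma int_abs_le:
  fixes f g :: "'a \<Rightarrow> real"
  assumes "f \<in> borel_measurable M" "integrable M g" "AE x in M. \<bar>f x\<bar> \<le> g x"
  shows "integrable M f" "\<bar>\<integral>x. f x \<partial>M\<bar> \<le> (\<integral>x. g x \<partial>M)"
proof -
  show i: "integrable M f"
    by (rule Bochner_Integration.integrable_bound[OF assms(2) assms(1)]) (use assms(3) in auto)
  have "\<bar>\<integral>x. f x \<partial>M\<bar> \<le> (\<integral>x. \<bar>f x\<bar> \<partial>M)"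
    using Bochner_Integration.integral_norm_bound[of M f] by simp
  also have "\<dots> \<le> (\<integral>x. g x \<partial>M)"
    by (rule integral_mono_AE) (use i assms in auto)
  finally show "\<bar>\<integral>x. f x \<partial>M\<bar> \<le> (\<integral>x. g x \<partial>M)" .
qed

locale isetup = prob_space M for M :: "'a measure" +
  fixes w :: "'a \<Rightarrow> real"
  assumes wm[measurable]: "w \<in> borel_measurable M"
    and wnn: "AE x in M. 0 \<le> w x"
    and w2: "integrable M (\<lambda>x. (w x)^2)"
    and E1pos: "0 < (\<integral>x. w x \<partial>M)"
    and s1: "(\<integral>x. (w x)^2 \<partial>M) < 1"
begin

abbreviation "E1 \<equiv> (\<integral>x. w x \<partial>M)"
abbreviation "E2 \<equiv> (\<integral>x. (w x)^2 \<partial>M)"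

lemma w1[simp]: "integrable M w"
  by (rule square_integrable_imp_integrable[OF wm w2])

lemma wp1: "integrable M (\<lambda>x. (w x + 1)^2)"
proof -
  have "integrable M (\<lambda>x. (w x)^2 + 2 * w x + 1)"
    using w2 by (intro Bochner_Integration.integrable_add Bochner_Integration.integrable_mult_right w1 integrable_const) auto
  then show ?thesis by (simp add: power2_eq_square algebra_simps)
qed

lemma E2nn: "0 \<le> E2" by (rule integral_nonneg_AE) auto

definition psi :: "real \<Rightarrow> real" where
  "psi d = (\<integral>x. (w x + 1)^2 * min 1 ((w x + 1) * d) \<partial>M)"

lemma psi_int: "0 \<le> d \<Longrightarrow> integrable M (\<lambda>x. (w x + 1)^2 * min 1 ((w x + 1) * d))"
  by (rule int_abs_le(1)[OF _ wp1]) (use wnn in \<open>auto simp: abs_mult\<close>)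

lemma psi_nonneg: "0 \<le> d \<Longrightarrow> 0 \<le> psi d"
  unfolding psi_def by (rule integral_nonneg_AE) (use wnn in auto)

lemma psi_mono: assumes "0 \<le> d" "d \<le> d'" shows "psi d \<le> psi d'"
  unfolding psi_def
proof (rule integral_mono_AE[OF psi_int psi_int])
  show "AE x in M. (w x + 1)\<^sup>2 * min 1 ((w x + 1) * d) \<le> (w x + 1)\<^sup>2 * min 1 ((w x + 1) * d')"
    using wnn
  proof eventually_elim
    case (elim x)
    have "min 1 ((w x + 1) * d) \<le> min 1 ((w x + 1) * d')"
      by (rule min.mono) (use elim assms in \<open>auto intro: mult_left_mono\<close>)
    then show ?case by (rule mult_left_mono) simp
  qed
qed (use assms in auto)

lemma psi_small: assumes "0 < e" shows "\<exists>d>0. \<forall>t. 0 \<le> t \<and> t \<le> d \<longrightarrow> psi t < e"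
proof -
  let ?s = "\<lambda>n x. (w x + 1)^2 * min 1 ((w x + 1) * inverse (real (Suc n)))"
  have "(\<lambda>n. integral\<^sup>L M (?s n)) \<longlonglongrightarrow> integral\<^sup>L M (\<lambda>x. 0)"
  proof (rule integral_dominated_convergence[where w="\<lambda>x. (w x + 1)^2"])
    show "integrable M (\<lambda>x. (w x + 1)^2)" by (rule wp1)
    show "AE x in M. (\<lambda>i. ?s i x) \<longlonglongrightarrow> 0"
    proof (rule AE_I2)
      fix x
      have "(\<lambda>i. (w x + 1)^2 * min 1 ((w x + 1) * inverse (real (Suc i)))) \<longlonglongrightarrow> (w x + 1)^2 * min 1 ((w x + 1) * 0)"
        by (intro tendsto_intros LIMSEQ_inverse_real_of_nat)
      then show "(\<lambda>i. ?s i x) \<longlonglongrightarrow> 0" by simp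
    qed
    show "AE x in M. norm (?s i x) \<le> (w x + 1)^2" for i
      using wnn by eventually_elim (auto simp: abs_mult)
  qed auto
  then have "(\<lambda>n. psi (inverse (real (Suc n)))) \<longlonglongrightarrow> 0" by (simp add: psi_def)
  then obtain N where N: "psi (inverse (real (Suc N))) < e"
    using assms by (metis LIMSEQ_D diff_zero norm_ge_zero order.refl real_norm_def abs_less_iff)
  show ?thesis
  proof (intro exI conjI allI impI)
    show "0 < inverse (real (Suc N))" by simp
    fix t assume "0 \<le> t \<and> t \<le> inverse (real (Suc N))"
    then show "psi t < e" using psi_mono[of t "inverse (real (Suc N))"] N by auto
  qed
qed

definition F :: "real \<Rightarrow> real \<Rightarrow> real" where
  "F z B = (\<integral>x. tanh (w x * z + B) * w x \<partial>M)"

lemma F_int: "integrable M (\<lambda>x. tanh (w x * z + B) * w x)"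
proof (rule int_abs_le(1)[of _ _ "\<lambda>x. \<bar>w x\<bar>"])
  show "AE x in M. \<bar>tanh (w x * z + B) * w x\<bar> \<le> \<bar>w x\<bar>"
  proof (rule AE_I2)
    fix x show "\<bar>tanh (w x * z + B) * w x\<bar> \<le> \<bar>w x\<bar>"
      using tanh_abs_lt1[of "w x * z + B"] by (simp add: abs_mult mult_left_le_one_le)
  qed
qed auto

lemma F_lip: "\<bar>F z B - F z' B'\<bar> \<le> E2 * \<bar>z - z'\<bar> + E1 * \<bar>B - B'\<bar>"
proof -
  have "F z B - F z' B' = (\<integral>x. (tanh (w x * z + B) - tanh (w x * z' + B')) * w x \<partial>M)"
    unfolding F_def Bochner_Integration.integral_diff[OF F_int F_int, symmetric] by (simp add: left_diff_distrib)
  also have "\<bar>\<dots>\<bar> \<le> (\<integral>x. (w x)^2 * \<bar>z - z'\<bar> + w x * \<bar>B - B'\<bar> \<partial>M)"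
  proof (rule int_abs_le(2))
    show "integrable M (\<lambda>x. (w x)^2 * \<bar>z - z'\<bar> + w x * \<bar>B - B'\<bar>)"
      using w2 by (intro Bochner_Integration.integrable_add Bochner_Integration.integrable_mult_left w1) auto
    show "AE x in M. \<bar>(tanh (w x * z + B) - tanh (w x * z' + B')) * w x\<bar> \<le> (w x)^2 * \<bar>z - z'\<bar> + w x * \<bar>B - B'\<bar>"
      using wnn
    proof eventually_elim
      case (elim x)
      have "\<bar>tanh (w x * z + B) - tanh (w x * z' + B')\<bar> \<le> \<bar>w x * (z - z') + (B - B')\<bar>"
        using tanh_lip[of "w x * z + B" "w x * z' + B'"] by (simp add: algebra_simps)
      also have "\<dots> \<le> w x * \<bar>z - z'\<bar> + \<bar>B - B'\<bar>"
        using elim by (metis abs_mult abs_of_nonneg abs_triangle_ineq)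
      finally have "\<bar>tanh (w x * z + B) - tanh (w x * z' + B')\<bar> * w x \<le> (w x * \<bar>z - z'\<bar> + \<bar>B - B'\<bar>) * w x"
        using elim by (rule mult_right_mono)
      moreover have "\<bar>(tanh (w x * z + B) - tanh (w x * z' + B')) * w x\<bar> = \<bar>tanh (w x * z + B) - tanh (w x * z' + B')\<bar> * w x"
        using elim by (simp add: abs_mult)
      moreover have "(w x * \<bar>z - z'\<bar> + \<bar>B - B'\<bar>) * w x = (w x)^2 * \<bar>z - z'\<bar> + w x * \<bar>B - B'\<bar>"
        by (simp add: power2_eq_square algebra_simps)
      ultimately show ?case by simp
    qed
  qed auto
  also have "\<dots> = E2 * \<bar>z - z'\<bar> + E1 * \<bar>B - B'\<bar>"
    using w2 by (subst Bochner_Integration.integral_add) auto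
  finally show ?thesis .
qed

lemma F_0: "F 0 B = tanh B * E1"
  unfolding F_def by simp

lemma fp_unique: assumes "z = F z B" "z' = F z' B" shows "z = z'"
proof -
  have "\<bar>z - z'\<bar> \<le> E2 * \<bar>z - z'\<bar>" using F_lip[of z B z' B] assms by simp
  then show ?thesis using s1 E2nn
    by (metis abs_ge_zero eq_iff_diff_eq_0 mult_le_cancel_right1 not_le zero_less_abs_iff)
qed

lemma F_isCont: "isCont (\<lambda>z. F z B) z"
  unfolding isCont_def LIM_eq
proof (intro allI impI)
  fix r :: real assume r: "0 < r"
  show "\<exists>s>0. \<forall>y. y \<noteq> z \<and> norm (y - z) < s \<longrightarrow> norm (F y B - F z B) < r"
  proof (intro exI[of _ "r / (E2 + 1)"] conjI allI impI)
    have "0 < E2 + 1" using E2nn by linarith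
    then show "0 < r / (E2 + 1)" using r by (auto intro!: divide_pos_pos)
    fix y assume y: "y \<noteq> z \<and> norm (y - z) < r / (E2 + 1)"
    have "\<bar>F y B - F z B\<bar> \<le> E2 * \<bar>y - z\<bar>" using F_lip[of y B z B] by simp
    also have "\<dots> \<le> (E2 + 1) * \<bar>y - z\<bar>" by (simp add: mult_right_mono)
    also have "\<dots> < r" using y E2nn by (simp add: field_simps)
    finally show "norm (F y B - F z B) < r" by simp
  qed
qed

lemma fp_exists: assumes "0 < B" shows "\<exists>z>0. z = F z B"
proof -
  have le: "F z B \<le> E1" for z
  proof -
    have "F z B \<le> (\<integral>x. w x \<partial>M)"
      unfolding F_def
      by (rule integral_mono_AE[OF F_int w1]) (use wnn in \<open>eventually_elim, metis mult.commute mult_left_le less_imp_le[OF tanh_real_lt_1]\<close>)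
    then show ?thesis .
  qed
  have "\<exists>z. 0 \<le> z \<and> z \<le> E1 \<and> F z B - z = 0"
  proof (rule IVT2)
    show "F E1 B - E1 \<le> 0" using le[of E1] by simp
    show "0 \<le> F 0 B - 0" using F_0 assms E1pos by simp
    show "0 \<le> E1" using E1pos by simp
    show "\<forall>x. 0 \<le> x \<and> x \<le> E1 \<longrightarrow> isCont (\<lambda>z. F z B - z) x"
      using F_isCont by (auto intro!: continuous_intros)
  qed
  then obtain z where z: "0 \<le> z" "F z B - z = 0" by blast
  have "z \<noteq> 0" using z F_0[of B] assms E1pos by auto
  then show ?thesis using z by (intro exI[of _ z]) auto
qed

definition zs :: "real \<Rightarrow> real" where
  "zs B = (THE z. z > 0 \<and> z = F z B)"

lemma zs_spec: assumes "0 < B" shows "zs B > 0" "zs B = F (zs B) B"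
proof -
  have "\<exists>!z. z > 0 \<and> z = F z B" using fp_exists[OF assms] fp_unique by blast
  from theI'[OF this] show "zs B > 0" "zs B = F (zs B) B" unfolding zs_def by auto
qed

lemma zs_bound: assumes "0 < B" shows "zs B \<le> E1 * B / (1 - E2)"
proof -
  have "\<bar>F (zs B) B - F 0 0\<bar> \<le> E2 * \<bar>zs B - 0\<bar> + E1 * \<bar>B - 0\<bar>" by (rule F_lip)
  then have "zs B \<le> E2 * zs B + E1 * B" using zs_spec[OF assms] assms F_0[of 0] by simp
  then show ?thesis using s1 by (simp add: field_simps)
qed

end



definition sech2 :: "real \<Rightarrow> real" where "sech2 t = 1 - tanh t ^ 2"

lemma sech2_bounds: "0 \<le> sech2 t" "sech2 t \<le> 1"
  using S_bounds[of t] by (auto simp: sech2_def)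

lemma sech2_meas[measurable]: "f \<in> borel_measurable M \<Longrightarrow> (\<lambda>x. sech2 (f x)) \<in> borel_measurable M"
  unfolding sech2_def by measurable

lemma pw_rem:
  fixes w u v d :: real
  assumes "0 \<le> w" "\<bar>v - u\<bar> \<le> (w + 1) * d"
  shows "\<bar>tanh v - tanh u - sech2 u * (v - u)\<bar> \<le> 2 * d * ((w + 1)^2 * min 1 ((w + 1) * d))"
    and "w * \<bar>tanh v - tanh u - sech2 u * (v - u)\<bar> \<le> 2 * d * ((w + 1)^2 * min 1 ((w + 1) * d))"
proof -
  have d: "0 \<le> d" using assms by (smt (verit) mult_nonneg_nonneg zero_le_mult_iff)
  have m: "min 1 \<bar>v - u\<bar> \<le> min 1 ((w + 1) * d)" using assms(2) by simp
  have "\<bar>tanh v - tanh u - sech2 u * (v - u)\<bar> \<le> 2 * \<bar>v - u\<bar> * min 1 \<bar>v - u\<bar>"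
    using tanh_rem[of v u] by (simp add: sech2_def)
  also have "\<dots> \<le> 2 * ((w + 1) * d) * min 1 ((w + 1) * d)"
    by (intro mult_mono m) (use assms in auto)
  finally have r: "\<bar>tanh v - tanh u - sech2 u * (v - u)\<bar> \<le> (w + 1) * (2 * d * min 1 ((w + 1) * d))"
    by (simp add: algebra_simps)
  have nn: "0 \<le> 2 * d * min 1 ((w + 1) * d)" using d assms by auto
  have "(w + 1) * (2 * d * min 1 ((w + 1) * d)) \<le> (w + 1)^2 * (2 * d * min 1 ((w + 1) * d))"
    by (rule mult_right_mono[OF _ nn]) (use assms in \<open>simp add: power2_eq_square\<close>)
  then show "\<bar>tanh v - tanh u - sech2 u * (v - u)\<bar> \<le> 2 * d * ((w + 1)^2 * min 1 ((w + 1) * d))"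
    using r by (simp add: algebra_simps)
  have "w * \<bar>tanh v - tanh u - sech2 u * (v - u)\<bar> \<le> w * ((w + 1) * (2 * d * min 1 ((w + 1) * d)))"
    by (rule mult_left_mono[OF r assms(1)])
  also have "\<dots> \<le> (w + 1)^2 * (2 * d * min 1 ((w + 1) * d))"
  proof -
    have "w * (w + 1) \<le> (w + 1)^2" using assms by (simp add: power2_eq_square)
    from mult_right_mono[OF this nn] show ?thesis by (simp add: mult.assoc)
  qed
  finally show "w * \<bar>tanh v - tanh u - sech2 u * (v - u)\<bar> \<le> 2 * d * ((w + 1)^2 * min 1 ((w + 1) * d))"
    by (simp add: algebra_simps)
qed

lemma lin4:
  fixes f1 f2 f3 f4 :: "'a \<Rightarrow> real"
  assumes "integrable M f1" "integrable M f2" "integrable M f3" "integrable M f4"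
  shows "(\<integral>x. f1 x - f2 x - a * f3 x - b * f4 x \<partial>M) = integral\<^sup>L M f1 - integral\<^sup>L M f2 - a * integral\<^sup>L M f3 - b * integral\<^sup>L M f4"
  using assms by (simp add: Bochner_Integration.integral_diff Bochner_Integration.integrable_diff)

context isetup begin

definition Mt :: "real \<Rightarrow> real" where
  "Mt B = (\<integral>x. tanh (w x * zs B + B) \<partial>M)"
definition A0 :: "real \<Rightarrow> real" where "A0 B = (\<integral>x. sech2 (w x * zs B + B) \<partial>M)"
definition A1 :: "real \<Rightarrow> real" where "A1 B = (\<integral>x. w x * sech2 (w x * zs B + B) \<partial>M)"
definition A2 :: "real \<Rightarrow> real" where "A2 B = (\<integral>x. (w x)^2 * sech2 (w x * zs B + B) \<partial>M)"
definition "cc = E1 / (1 - E2) + 1"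
definition chiw :: "real \<Rightarrow> real" where "chiw B = A0 B + A1 B * A1 B / (1 - A2 B)"

lemma int_sech2: assumes "integrable M g" "f \<in> borel_measurable M" shows "integrable M (\<lambda>x. g x * sech2 (f x))"
proof (rule int_abs_le(1)[OF _ integrable_abs[OF assms(1)]])
  show "AE x in M. \<bar>g x * sech2 (f x)\<bar> \<le> \<bar>g x\<bar>"
    by (rule AE_I2) (simp add: abs_mult abs_of_nonneg sech2_bounds mult_left_le)
  show "(\<lambda>x. g x * sech2 (f x)) \<in> borel_measurable M" using assms by measurable
qed

lemma int_tanh: fixes f :: "'a \<Rightarrow> real" assumes "f \<in> borel_measurable M" shows "integrable M (\<lambda>x. tanh (f x))"
proof (rule int_abs_le(1))
  show "integrable M (\<lambda>_. 1::real)" by simp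
  show "AE x in M. \<bar>tanh (f x)\<bar> \<le> 1" by (simp add: less_imp_le[OF tanh_abs_lt1])
qed (use assms in measurable)

lemma int_sech2': fixes f :: "'a \<Rightarrow> real" assumes "f \<in> borel_measurable M" shows "integrable M (\<lambda>x. sech2 (f x))"
  using int_sech2[of "\<lambda>_. 1" f] assms by simp

lemma est:
  assumes B: "0 < B" and Bh: "0 < B + h"
  shows "\<bar>zs (B + h) - zs B\<bar> * (1 - E2) \<le> E1 * \<bar>h\<bar>"
    and "\<bar>(zs (B + h) - zs B) * (1 - A2 B) - h * A1 B\<bar> \<le> 2 * (\<bar>zs (B + h) - zs B\<bar> + \<bar>h\<bar>) * psi (\<bar>zs (B + h) - zs B\<bar> + \<bar>h\<bar>)"
    and "\<bar>Mt (B + h) - Mt B - A1 B * (zs (B + h) - zs B) - A0 B * h\<bar> \<le> 2 * (\<bar>zs (B + h) - zs B\<bar> + \<bar>h\<bar>) * psi (\<bar>zs (B + h) - zs B\<bar> + \<bar>h\<bar>)"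
proof -
  define z where "z = zs B"
  define z' where "z' = zs (B + h)"
  define D where "D = z' - z"
  define d where "d = \<bar>D\<bar> + \<bar>h\<bar>"
  have fz: "z = F z B" using zs_spec[OF B] by (simp add: z_def)
  have fz': "z' = F z' (B + h)" using zs_spec[OF Bh] by (simp add: z'_def)
  have "\<bar>F z' (B + h) - F z B\<bar> \<le> E2 * \<bar>z' - z\<bar> + E1 * \<bar>B + h - B\<bar>" by (rule F_lip)
  then have "\<bar>D\<bar> \<le> E2 * \<bar>D\<bar> + E1 * \<bar>h\<bar>" using fz fz' by (simp add: D_def)
  then show "\<bar>zs (B + h) - zs B\<bar> * (1 - E2) \<le> E1 * \<bar>h\<bar>"
    by (simp add: D_def z_def z'_def algebra_simps)
  have d0: "0 \<le> d" by (simp add: d_def)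
  have vu: "\<bar>(w x * z' + (B + h)) - (w x * z + B)\<bar> \<le> (w x + 1) * d" if "0 \<le> w x" for x
  proof -
    have "(w x * z' + (B + h)) - (w x * z + B) = w x * D + h" by (simp add: D_def algebra_simps)
    also have "\<bar>\<dots>\<bar> \<le> w x * \<bar>D\<bar> + \<bar>h\<bar>"
      using that by (metis abs_mult abs_of_nonneg abs_triangle_ineq)
    also have "\<dots> \<le> (w x + 1) * d" using that by (simp add: d_def algebra_simps)
    finally show ?thesis .
  qed
  have gint: "integrable M (\<lambda>x. 2 * d * ((w x + 1)^2 * min 1 ((w x + 1) * d)))"
    using psi_int[OF d0] by simp
  have gval: "(\<integral>x. 2 * d * ((w x + 1)^2 * min 1 ((w x + 1) * d)) \<partial>M) = 2 * d * psi d"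
    by (simp add: psi_def)
  have "D * (1 - A2 B) - h * A1 B = (\<integral>x. tanh (w x * z' + (B + h)) * w x - tanh (w x * z + B) * w x
        - D * ((w x)^2 * sech2 (w x * z + B)) - h * (w x * sech2 (w x * z + B)) \<partial>M)"
  proof -
    have "(\<integral>x. tanh (w x * z' + (B + h)) * w x - tanh (w x * z + B) * w x
        - D * ((w x)^2 * sech2 (w x * z + B)) - h * (w x * sech2 (w x * z + B)) \<partial>M)
       = F z' (B + h) - F z B - D * A2 B - h * A1 B"
      unfolding F_def A1_def A2_def z_def[symmetric]
      by (rule lin4[OF F_int F_int int_sech2[OF w2] int_sech2[OF w1]]) measurable
    then show ?thesis using fz fz' by (simp add: D_def algebra_simps)
  qed
  also have "\<dots> = (\<integral>x. w x * (tanh (w x * z' + (B + h)) - tanh (w x * z + B) - sech2 (w x * z + B) * ((w x * z' + (B + h)) - (w x * z + B))) \<partial>M)"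
    by (rule Bochner_Integration.integral_cong) (simp_all add: D_def power2_eq_square algebra_simps)
  finally have eq2: "D * (1 - A2 B) - h * A1 B = \<dots>" .
  have "\<bar>D * (1 - A2 B) - h * A1 B\<bar> \<le> 2 * d * psi d"
    unfolding eq2 gval[symmetric]
  proof (rule int_abs_le(2)[OF _ gint])
    show "AE x in M. \<bar>w x * (tanh (w x * z' + (B + h)) - tanh (w x * z + B) - sech2 (w x * z + B) * ((w x * z' + (B + h)) - (w x * z + B)))\<bar>
          \<le> 2 * d * ((w x + 1)^2 * min 1 ((w x + 1) * d))"
      using wnn
    proof eventually_elim
      case (elim x)
      show ?case using pw_rem(2)[OF elim vu[OF elim]] elim by (simp add: abs_mult)
    qed
  qed measurable
  then show "\<bar>(zs (B + h) - zs B) * (1 - A2 B) - h * A1 B\<bar> \<le> 2 * (\<bar>zs (B + h) - zs B\<bar> + \<bar>h\<bar>) * psi (\<bar>zs (B + h) - zs B\<bar> + \<bar>h\<bar>)"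
    by (simp add: D_def d_def z_def z'_def)
  have "Mt (B + h) - Mt B - A1 B * D - A0 B * h = (\<integral>x. tanh (w x * z' + (B + h)) - tanh (w x * z + B)
        - D * (w x * sech2 (w x * z + B)) - h * (sech2 (w x * z + B)) \<partial>M)"
  proof -
    have "(\<integral>x. tanh (w x * z' + (B + h)) - tanh (w x * z + B)
        - D * (w x * sech2 (w x * z + B)) - h * (sech2 (w x * z + B)) \<partial>M)
       = Mt (B + h) - Mt B - D * A1 B - h * A0 B"
      unfolding Mt_def A1_def A0_def z_def[symmetric] z'_def[symmetric]
      by (rule lin4[OF int_tanh int_tanh int_sech2[OF w1] int_sech2']) measurable
    then show ?thesis by (simp add: algebra_simps)
  qed
  also have "\<dots> = (\<integral>x. (tanh (w x * z' + (B + h)) - tanh (w x * z + B) - sech2 (w x * z + B) * ((w x * z' + (B + h)) - (w x * z + B))) \<partial>M)"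
    by (rule Bochner_Integration.integral_cong) (simp_all add: D_def algebra_simps)
  finally have eq3: "Mt (B + h) - Mt B - A1 B * D - A0 B * h = \<dots>" .
  have "\<bar>Mt (B + h) - Mt B - A1 B * D - A0 B * h\<bar> \<le> 2 * d * psi d"
    unfolding eq3 gval[symmetric]
  proof (rule int_abs_le(2)[OF _ gint])
    show "AE x in M. \<bar>tanh (w x * z' + (B + h)) - tanh (w x * z + B) - sech2 (w x * z + B) * ((w x * z' + (B + h)) - (w x * z + B))\<bar>
          \<le> 2 * d * ((w x + 1)^2 * min 1 ((w x + 1) * d))"
      using wnn
    proof eventually_elim
      case (elim x)
      show ?case using pw_rem(1)[OF elim vu[OF elim]] .
    qed
  qed measurable
  then show "\<bar>Mt (B + h) - Mt B - A1 B * (zs (B + h) - zs B) - A0 B * h\<bar> \<le> 2 * (\<bar>zs (B + h) - zs B\<bar> + \<bar>h\<bar>) * psi (\<bar>zs (B + h) - zs B\<bar> + \<bar>h\<bar>)"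
    by (simp add: D_def d_def z_def z'_def)
qed

lemma A2_le: "A2 B \<le> E2"
  unfolding A2_def
  by (rule integral_mono_AE[OF int_sech2[OF w2] w2]) (auto simp: sech2_bounds mult_left_le)

lemma A1_bounds: "0 \<le> A1 B" "A1 B \<le> E1"
  unfolding A1_def
  using wnn by (auto intro!: integral_nonneg_AE integral_mono_AE[OF int_sech2[OF w1] w1] simp: sech2_bounds mult_left_le)

lemma cc_ge1: "1 \<le> cc"
  unfolding cc_def using E1pos s1 by simp

lemma quot_est:
  assumes B: "0 < B" and Bh: "0 < B + h" and h: "h \<noteq> 0"
  shows "\<bar>(Mt (B + h) - Mt B) / h - chiw B\<bar> \<le> 2 * cc^2 * psi (cc * \<bar>h\<bar>)"
proof -
  define D where "D = zs (B + h) - zs B"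
  define q where "q = 1 - A2 B"
  define a1 where "a1 = A1 B"
  define P where "P = psi (cc * \<bar>h\<bar>)"
  define K where "K = 2 * cc * P"
  have e1: "\<bar>D\<bar> * (1 - E2) \<le> E1 * \<bar>h\<bar>" using est(1)[OF B Bh] by (simp add: D_def)
  have e2: "\<bar>D * q - h * a1\<bar> \<le> 2 * (\<bar>D\<bar> + \<bar>h\<bar>) * psi (\<bar>D\<bar> + \<bar>h\<bar>)"
    using est(2)[OF B Bh] by (simp add: D_def q_def a1_def)
  have e3: "\<bar>Mt (B + h) - Mt B - a1 * D - A0 B * h\<bar> \<le> 2 * (\<bar>D\<bar> + \<bar>h\<bar>) * psi (\<bar>D\<bar> + \<bar>h\<bar>)"
    using est(3)[OF B Bh] by (simp add: D_def a1_def)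
  have sE: "0 < 1 - E2" using s1 by simp
  have dle: "\<bar>D\<bar> + \<bar>h\<bar> \<le> cc * \<bar>h\<bar>"
  proof -
    have "\<bar>D\<bar> \<le> E1 * \<bar>h\<bar> / (1 - E2)" using e1 sE by (simp add: field_simps)
    then show ?thesis by (simp add: cc_def field_simps)
  qed
  have P0: "0 \<le> P" unfolding P_def by (rule psi_nonneg, rule mult_nonneg_nonneg) (use cc_ge1 in auto)
  have pd: "psi (\<bar>D\<bar> + \<bar>h\<bar>) \<le> P" unfolding P_def by (rule psi_mono[OF _ dle]) simp
  have key: "2 * (\<bar>D\<bar> + \<bar>h\<bar>) * psi (\<bar>D\<bar> + \<bar>h\<bar>) \<le> K * \<bar>h\<bar>"
  proof -
    have "2 * (\<bar>D\<bar> + \<bar>h\<bar>) * psi (\<bar>D\<bar> + \<bar>h\<bar>) \<le> 2 * (cc * \<bar>h\<bar>) * P"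
      using cc_ge1 by (intro mult_mono dle pd) (auto intro!: psi_nonneg)
    then show ?thesis by (simp add: K_def algebra_simps)
  qed
  have q: "1 - E2 \<le> q" using A2_le[of B] by (simp add: q_def)
  have qpos: "0 < q" using q sE by simp
  have a1: "0 \<le> a1" "a1 \<le> E1" using A1_bounds[of B] by (auto simp: a1_def)
  have K0: "0 \<le> K" using P0 cc_ge1 by (simp add: K_def)
  have ident: "(Mt (B + h) - Mt B) / h - chiw B = (Mt (B + h) - Mt B - a1 * D - A0 B * h) / h + a1 * ((D * q - h * a1) / (h * q))"
    using h qpos by (simp add: chiw_def q_def a1_def field_simps)
  have t1: "\<bar>(Mt (B + h) - Mt B - a1 * D - A0 B * h) / h\<bar> \<le> K"
    using e3 key h by (simp add: abs_divide divide_le_eq)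
  have "\<bar>(D * q - h * a1) / (h * q)\<bar> = \<bar>D * q - h * a1\<bar> / (\<bar>h\<bar> * q)"
    using qpos by (simp add: abs_divide abs_mult)
  also have "\<dots> \<le> K * \<bar>h\<bar> / (\<bar>h\<bar> * q)"
    using e2 key qpos h by (intro divide_right_mono) auto
  also have "\<dots> = K / q" using h by simp
  also have "\<dots> \<le> K / (1 - E2)" using q sE K0 by (intro divide_left_mono) auto
  finally have t2': "\<bar>(D * q - h * a1) / (h * q)\<bar> \<le> K / (1 - E2)" .
  have t2: "\<bar>a1 * ((D * q - h * a1) / (h * q))\<bar> \<le> E1 * (K / (1 - E2))"
    unfolding abs_mult using a1 t2' by (intro mult_mono) auto
  have "\<bar>(Mt (B + h) - Mt B) / h - chiw B\<bar> \<le> K + E1 * (K / (1 - E2))"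
    unfolding ident using t1 t2 by linarith
  also have "\<dots> = 2 * cc^2 * psi (cc * \<bar>h\<bar>)"
    by (simp add: K_def P_def cc_def power2_eq_square field_simps)
  finally show ?thesis .
qed

lemma Mt_deriv: assumes B: "0 < B" shows "(Mt has_real_derivative chiw B) (at B)"
  unfolding DERIV_def LIM_eq
proof (intro allI impI)
  fix r :: real assume r: "0 < r"
  have c2: "0 < 2 * cc^2" using cc_ge1 by simp
  obtain d where d: "0 < d" "\<And>t. 0 \<le> t \<Longrightarrow> t \<le> d \<Longrightarrow> psi t < r / (2 * cc^2)"
    using psi_small[of "r / (2 * cc^2)"] r c2 by auto
  show "\<exists>s>0. \<forall>h. h \<noteq> 0 \<and> norm (h - 0) < s \<longrightarrow> norm ((Mt (B + h) - Mt B) / h - chiw B) < r"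
  proof (intro exI[of _ "min B (d / cc)"] conjI allI impI)
    show "0 < min B (d / cc)" using B d cc_ge1 by simp
    fix h :: real assume h: "h \<noteq> 0 \<and> norm (h - 0) < min B (d / cc)"
    have Bh: "0 < B + h" using h by auto
    have "cc * \<bar>h\<bar> \<le> d" using h cc_ge1 by (auto simp: field_simps)
    then have "psi (cc * \<bar>h\<bar>) < r / (2 * cc^2)" using d(2)[of "cc * \<bar>h\<bar>"] cc_ge1 by simp
    then have "2 * cc^2 * psi (cc * \<bar>h\<bar>) < r" using c2 by (simp add: field_simps)
    then show "norm ((Mt (B + h) - Mt B) / h - chiw B) < r"
      using quot_est[OF B Bh] h by fastforce
  qed
qed

lemma A_gen:
  assumes B: "0 < B" and g[measurable]: "g \<in> borel_measurable M" and gi: "integrable M g"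
    and gb: "AE x in M. 0 \<le> g x \<and> g x \<le> (w x + 1)^2"
  shows "\<bar>(\<integral>x. g x * sech2 (w x * zs B + B) \<partial>M) - integral\<^sup>L M g\<bar> \<le> psi (cc * B)"
proof -
  define z where "z = zs B"
  have z0: "0 < z" using zs_spec[OF B] by (simp add: z_def)
  have zB: "z + B \<le> cc * B" using zs_bound[OF B] by (simp add: z_def cc_def algebra_simps)
  have "(\<integral>x. g x * sech2 (w x * zs B + B) \<partial>M) - integral\<^sup>L M g = (\<integral>x. g x * sech2 (w x * z + B) - g x \<partial>M)"
    by (simp add: z_def Bochner_Integration.integral_diff[OF int_sech2[OF gi] gi])
  also have "\<bar>\<dots>\<bar> \<le> psi (cc * B)"
    unfolding psi_def
  proof (rule int_abs_le(2)[OF _ psi_int])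
    show "AE x in M. \<bar>g x * sech2 (w x * z + B) - g x\<bar> \<le> (w x + 1)^2 * min 1 ((w x + 1) * (cc * B))"
      using gb wnn
    proof eventually_elim
      case (elim x)
      have u0: "0 \<le> w x * z + B" using elim z0 B by simp
      have "\<bar>g x * sech2 (w x * z + B) - g x\<bar> = g x * tanh (w x * z + B) ^ 2"
        using elim by (simp add: sech2_def algebra_simps)
      also have "\<dots> \<le> (w x + 1)^2 * min 1 \<bar>w x * z + B\<bar>"
        by (rule mult_mono) (use elim tanh_sq_le in auto)
      also have "\<bar>w x * z + B\<bar> \<le> (w x + 1) * (cc * B)"
      proof -
        have "w x * z + B \<le> (w x + 1) * (z + B)" using elim z0 B by (simp add: algebra_simps)
        also have "\<dots> \<le> (w x + 1) * (cc * B)" using zB elim by (intro mult_left_mono) auto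
        finally show ?thesis using u0 by simp
      qed
      then have "min 1 \<bar>w x * z + B\<bar> \<le> min 1 ((w x + 1) * (cc * B))" by simp
      finally show ?case by (simp add: mult_left_mono)
    qed
  qed (use B cc_ge1 in auto)
  finally show ?thesis .
qed

lemma psi_lim: "((\<lambda>B. psi (cc * B)) \<longlongrightarrow> 0) (at_right 0)"
  unfolding tendsto_iff
proof (intro allI impI)
  fix e :: real assume e: "0 < e"
  obtain d where d: "0 < d" "\<And>t. 0 \<le> t \<Longrightarrow> t \<le> d \<Longrightarrow> psi t < e"
    using psi_small[OF e] by auto
  show "\<forall>\<^sub>F B in at_right 0. dist (psi (cc * B)) 0 < e"
    unfolding eventually_at_right_field
  proof (intro exI[of _ "d / cc"] conjI allI impI)
    show "0 < d / cc" using d cc_ge1 by simp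
    fix y :: real assume y: "0 < y" "y < d / cc"
    have t: "0 \<le> cc * y" "cc * y \<le> d" using y cc_ge1 by (auto simp: field_simps)
    show "dist (psi (cc * y)) 0 < e" using d(2)[OF t] psi_nonneg[OF t(1)] by simp
  qed
qed

lemma A_lim_gen:
  assumes g[measurable]: "g \<in> borel_measurable M" and gi: "integrable M g"
    and gb: "AE x in M. 0 \<le> g x \<and> g x \<le> (w x + 1)^2"
  shows "((\<lambda>B. (\<integral>x. g x * sech2 (w x * zs B + B) \<partial>M)) \<longlongrightarrow> integral\<^sup>L M g) (at_right 0)"
proof -
  have "((\<lambda>B. (\<integral>x. g x * sech2 (w x * zs B + B) \<partial>M) - integral\<^sup>L M g) \<longlongrightarrow> 0) (at_right 0)"
  proof (rule Lim_null_comparison[OF _ psi_lim])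
    show "\<forall>\<^sub>F B in at_right 0. norm ((\<integral>x. g x * sech2 (w x * zs B + B) \<partial>M) - integral\<^sup>L M g) \<le> psi (cc * B)"
      unfolding eventually_at_right_field
      by (intro exI[of _ 1]) (auto intro: A_gen[OF _ g gi gb])
  qed
  then show ?thesis by (simp add: LIM_zero_iff)
qed

lemma chiw_lim: "(chiw \<longlongrightarrow> 1 + E1 * E1 / (1 - E2)) (at_right 0)"
proof -
  have l0: "(A0 \<longlongrightarrow> 1) (at_right 0)"
  proof -
    have "AE x in M. 0 \<le> (1::real) \<and> 1 \<le> (w x + 1)^2"
      using wnn by eventually_elim (simp add: power2_eq_square algebra_simps)
    from A_lim_gen[of "\<lambda>_. 1", OF _ _ this] show ?thesis by (simp add: A0_def[abs_def] prob_space)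
  qed
  have l1: "(A1 \<longlongrightarrow> E1) (at_right 0)"
  proof -
    have "AE x in M. 0 \<le> w x \<and> w x \<le> (w x + 1)^2"
      using wnn by eventually_elim (simp add: power2_eq_square algebra_simps)
    from A_lim_gen[of w, OF _ _ this] show ?thesis by (simp add: A1_def[abs_def])
  qed
  have l2: "(A2 \<longlongrightarrow> E2) (at_right 0)"
  proof -
    have "AE x in M. 0 \<le> (w x)^2 \<and> (w x)^2 \<le> (w x + 1)^2"
      using wnn by eventually_elim (simp add: power2_eq_square algebra_simps)
    from A_lim_gen[of "\<lambda>x. (w x)^2", OF _ w2 this] show ?thesis by (simp add: A2_def[abs_def])
  qed
  have "((\<lambda>B. A0 B + A1 B * A1 B / (1 - A2 B)) \<longlongrightarrow> 1 + E1 * E1 / (1 - E2)) (at_right 0)"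
    by (intro tendsto_intros l0 l1 l2) (use s1 in simp)
  then show ?thesis by (simp add: chiw_def[abs_def])
qed

end



lemma per_beta:
  fixes M :: "'a measure" and W :: "'a \<Rightarrow> real"
  assumes ps: "prob_space M"
    and Wm: "W \<in> borel_measurable M"
    and Wnn: "AE x in M. W x \<ge> 0"
    and W2: "integrable M (\<lambda>x. (W x)^2)"
    and E1: "(\<integral>x. W x \<partial>M) > 0"
    and b0: "0 < \<beta>" and bc: "sinh \<beta> * (\<integral>x. (W x)^2 \<partial>M) / (\<integral>x. W x \<partial>M) < 1"
  shows "(\<forall>B>0. (\<lambda>b. Mtilde M W \<beta> b) differentiable at B) \<and>
         (chi M W \<beta> \<longlongrightarrow> 1 + sinh \<beta> * (\<integral>x. W x \<partial>M) / (1 - sinh \<beta> * (\<integral>x. (W x)^2 \<partial>M) / (\<integral>x. W x \<partial>M))) (at_right 0)"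
proof -
  define e1 where "e1 = (\<integral>x. W x \<partial>M)"
  define e2 where "e2 = (\<integral>x. (W x)^2 \<partial>M)"
  define a where "a = alpha M W \<beta>"
  have sb: "0 < sinh \<beta>" using b0 by simp
  have e1p: "0 < e1" using E1 by (simp add: e1_def)
  have a2: "a^2 = sinh \<beta> / e1" unfolding a_def alpha_def e1_def[symmetric]
    using sb e1p by simp
  have ap: "0 < a" unfolding a_def alpha_def e1_def[symmetric] using sb e1p by simp
  define w where "w x = a * W x" for x
  have ww: "(\<lambda>x. (w x)^2) = (\<lambda>x. a^2 * (W x)^2)" by (simp add: w_def power_mult_distrib)
  have Ew: "(\<integral>x. w x \<partial>M) = a * e1" by (simp add: w_def e1_def)
  have Ew2: "(\<integral>x. (w x)^2 \<partial>M) = a^2 * e2" by (simp add: ww e2_def)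
  have isI: "isetup M w"
  proof (intro isetup.intro ps isetup_axioms.intro)
    show "w \<in> borel_measurable M" unfolding w_def using Wm by measurable
    show "AE x in M. 0 \<le> w x" using Wnn by eventually_elim (use ap in \<open>simp add: w_def\<close>)
    show "integrable M (\<lambda>x. (w x)^2)" unfolding ww using W2 by simp
    show "0 < (\<integral>x. w x \<partial>M)" unfolding Ew using ap e1p by simp
    show "(\<integral>x. (w x)^2 \<partial>M) < 1" unfolding Ew2 a2 using bc by (simp add: e1_def e2_def)
  qed
  interpret I: isetup M w by (rule isI)
  have Mt_eq: "Mtilde M W \<beta> = I.Mt"
    by (rule ext) (simp add: Mtilde_def I.Mt_def I.zs_def I.F_def zstar_def w_def a_def)
  have chi_eq: "chi M W \<beta> B = I.chiw B" if "0 < B" for B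
    unfolding chi_def Mt_eq by (rule DERIV_imp_deriv[OF I.Mt_deriv[OF that]])
  have lim: "(chi M W \<beta> \<longlongrightarrow> 1 + (a * e1) * (a * e1) / (1 - a^2 * e2)) (at_right 0)"
  proof -
    have "(I.chiw \<longlongrightarrow> 1 + (a * e1) * (a * e1) / (1 - a^2 * e2)) (at_right 0)"
      using I.chiw_lim unfolding Ew Ew2 .
    moreover have "\<forall>\<^sub>F B in at_right 0. I.chiw B = chi M W \<beta> B"
      unfolding eventually_at_right_field by (intro exI[of _ 1]) (auto simp: chi_eq)
    ultimately show ?thesis by (rule Lim_transform_eventually)
  qed
  have eq1: "(a * e1) * (a * e1) = sinh \<beta> * e1" using a2 e1p by (simp add: power2_eq_square field_simps)
  have eq2: "a^2 * e2 = sinh \<beta> * e2 / e1" using a2 by simp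
  have diff: "\<forall>B>0. (\<lambda>b. Mtilde M W \<beta> b) differentiable at B"
    unfolding Mt_eq using I.Mt_deriv real_differentiable_def by blast
  from lim have "(chi M W \<beta> \<longlongrightarrow> 1 + sinh \<beta> * e1 / (1 - sinh \<beta> * e2 / e1)) (at_right 0)"
    by (simp only: eq1 eq2)
  then show ?thesis using diff by (simp add: e1_def e2_def)
qed

theorem mainTheorem4:
  fixes M :: "'a measure" and W :: "'a \<Rightarrow> real"
  assumes "prob_space M"
    and "W \<in> borel_measurable M"
    and "AE x in M. W x \<ge> 0"
    and "integrable M (\<lambda>x. (W x)^2)"
    and "(\<integral>x. W x \<partial>M) > 0"
  shows "(\<forall>\<^sub>F \<beta> in at_left (beta_c M W).
            (\<forall>B>0. (\<lambda>b. Mtilde M W \<beta> b) differentiable at B) \<and>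
            (\<exists>L. (chi M W \<beta> \<longlongrightarrow> L) (at_right 0)))
       \<and> ((\<lambda>\<beta>. chi0 M W \<beta> * (beta_c M W - \<beta>)) \<longlongrightarrow>
            (\<integral>x. W x \<partial>M)^2 / (\<integral>x. (W x)^2 \<partial>M) * tanh (beta_c M W))
           (at_left (beta_c M W))"
proof -
  note ps = assms(1) and Wm = assms(2) and Wnn = assms(3) and W2 = assms(4) and E1 = assms(5)
  define e1 where "e1 = (\<integral>x. W x \<partial>M)"
  define e2 where "e2 = (\<integral>x. (W x)^2 \<partial>M)"
  define bc where "bc = beta_c M W"
  have e1p: "0 < e1" using E1 by (simp add: e1_def)
  have e2p: "0 < e2"
  proof (rule ccontr)
    assume "\<not> 0 < e2"
    moreover have "0 \<le> e2" unfolding e2_def by (rule integral_nonneg_AE) auto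
    ultimately have "e2 = 0" by simp
    then have "AE x in M. (W x)^2 = 0"
      using integral_nonneg_eq_0_iff_AE[OF W2] by (simp add: e2_def)
    then have "AE x in M. W x = 0" by simp
    then have "e1 = 0" unfolding e1_def by (rule integral_eq_zero_AE)
    then show False using e1p by simp
  qed
  have bc_eq: "bc = arsinh (e1 / e2)"
    by (simp add: bc_def beta_c_def nu_def e1_def e2_def)
  have sbc: "sinh bc = e1 / e2" by (simp add: bc_eq)
  have bcp: "0 < bc" using e1p e2p arsinh_less_iff_real[of 0 "e1 / e2"] by (simp add: bc_eq)
  have ev: "\<forall>\<^sub>F \<beta> in at_left bc. 0 < \<beta> \<and> \<beta> < bc"
    unfolding eventually_at_left_field using bcp by (intro exI[of _ 0]) auto
  have pb: "(\<forall>B>0. (\<lambda>b. Mtilde M W \<beta> b) differentiable at B) \<and>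
         (chi M W \<beta> \<longlongrightarrow> 1 + sinh \<beta> * e1 / (1 - sinh \<beta> * e2 / e1)) (at_right 0)"
    if b: "0 < \<beta>" "\<beta> < bc" for \<beta>
  proof -
    have "sinh \<beta> < sinh bc" using b by simp
    then have "sinh \<beta> * e2 / e1 < 1" using sbc e1p e2p by (simp add: field_simps)
    from per_beta[OF ps Wm Wnn W2 E1 b(1)] this show ?thesis by (simp add: e1_def e2_def)
  qed
  have part1: "\<forall>\<^sub>F \<beta> in at_left bc. (\<forall>B>0. (\<lambda>b. Mtilde M W \<beta> b) differentiable at B) \<and>
            (\<exists>L. (chi M W \<beta> \<longlongrightarrow> L) (at_right 0))"
    using ev by (rule eventually_mono) (use pb in blast)
  define q where "q \<beta> = (sinh \<beta> - sinh bc) / (\<beta> - bc)" for \<beta>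
  have qlim: "(q \<longlongrightarrow> cosh bc) (at_left bc)"
  proof -
    have "((\<lambda>x. sinh x) has_field_derivative cosh bc * 1) (at bc within {..<bc})"
      by (rule has_field_derivative_sinh[OF DERIV_ident])
    then show ?thesis unfolding has_field_derivative_iff q_def[abs_def] by simp
  qed
  have eqg: "\<forall>\<^sub>F \<beta> in at_left bc. (bc - \<beta>) + sinh \<beta> * e1^2 / e2 / q \<beta> = chi0 M W \<beta> * (bc - \<beta>)"
    using ev
  proof (rule eventually_mono)
    fix \<beta> assume b: "0 < \<beta> \<and> \<beta> < bc"
    have c0: "chi0 M W \<beta> = 1 + sinh \<beta> * e1 / (1 - sinh \<beta> * e2 / e1)"
      unfolding chi0_def by (rule tendsto_Lim) (use pb[of \<beta>] b in auto)
    have d1: "0 < sinh bc - sinh \<beta>" using b by simp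
    have d2: "0 < bc - \<beta>" using b by simp
    have r: "1 - sinh \<beta> * e2 / e1 = e2 / e1 * (sinh bc - sinh \<beta>)"
      using e1p e2p by (simp add: sbc field_simps)
    have qv: "q \<beta> = (sinh bc - sinh \<beta>) / (bc - \<beta>)"
      unfolding q_def using d2 by (simp add: field_simps)
    show "(bc - \<beta>) + sinh \<beta> * e1^2 / e2 / q \<beta> = chi0 M W \<beta> * (bc - \<beta>)"
      unfolding c0 r qv using d1 d2 e1p e2p by (simp add: field_simps power2_eq_square)
  qed
  have glim: "((\<lambda>\<beta>. (bc - \<beta>) + sinh \<beta> * e1^2 / e2 / q \<beta>) \<longlongrightarrow> (bc - bc) + sinh bc * e1^2 / e2 / cosh bc) (at_left bc)"
    using e2p by (intro tendsto_intros qlim) (auto simp: order.strict_implies_not_eq[OF cosh_real_pos, symmetric])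
  have "(bc - bc) + sinh bc * e1^2 / e2 / cosh bc = e1^2 / e2 * tanh bc"
    by (simp add: tanh_def)
  with glim have "((\<lambda>\<beta>. chi0 M W \<beta> * (bc - \<beta>)) \<longlongrightarrow> e1^2 / e2 * tanh bc) (at_left bc)"
    using Lim_transform_eventually[OF _ eqg] by simp
  with part1 show ?thesis by (simp add: bc_def e1_def e2_def)
qed


end
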